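(* Let $\mathcal I$ be a canonical instance, and run the following procedure (Algorithm 1). Start with all bundles empty and all agents present. For $h=1,\dots,m$ in turn: let $\mathcal N_h$ be the set of agents $a_{i,j}$ still present with $v_{i,j}(e_h)\le w_i$; choose $a_{i,j}\in\mathcal N_h$ minimizing $v_{i,j}(e_h)$, breaking ties in favor of the smallest weight and remaining ties arbitrarily; add $e_h$ to $A_{i,j}$; if now $v_{i,j}(A_{i,j})\ge 3w_i$, remove $a_{i,j}$ from the set of present agents. Then, for every resolution of the remaining ties, $\mathcal N_h\neq\emptyset$ at every step $h$ (so every item is allocated), and the resulting allocation satisfies $v_{i,j}(A_{i,j})\le 3w_i=3\,\mathsf{WMMS}_{i,j}$ for every agent $a_{i,j}$; i.e. it is a $3$-WMMS allocation.
   Context: Chore-allocation instance: agents, a finite set $\mathcal M=\{e_1,\dots,e_m\}$ of indivisible items, positive weights, additive cost functions $v:2^{\mathcal M}\to\mathbb R_{\ge0}$. An allocation is an ordered partition of $\mathcal M$ into one (possibly empty) bundle per agent. The weighted maximin share of agent $a$ with weight $w_a$ and cost $v_a$ is $\mathsf{WMMS}_a=w_a\min_{\text{allocations }(B_b)_b}\max_{b}\frac{v_a(B_b)}{w_b}$; an allocation is $\beta$-WMMS if each agent's own bundle costs her at most $\beta\,\mathsf{WMMS}$. An instance is canonical if: (i) $\max$ weight is $w_1$, weights sum to $1$, and every weight equals $w_1/2^p$ for some nonnegative integer $p$; (ii) every agent's total cost $v(\mathcal M)=1$, and every single-item cost is either $0$ or $w_1/2^p$ for some nonnegative integer $p$;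 (iii) every agent has $v(e_1)\ge v(e_2)\ge\cdots\ge v(e_m)$; (iv) every agent's $\mathsf{WMMS}$ equals her weight. Group notation: agents of a canonical instance are partitioned into groups $G_1,\dots,G_k$ by weight, where all agents of $G_i$ have weight $w_i$ and $w_1>w_2>\cdots>w_k$; $G_i=\{a_{i,1},\dots,a_{i,n_i}\}$, and $v_{i,j},A_{i,j},\mathsf{WMMS}_{i,j}$ denote the cost function, bundle and WMMS of $a_{i,j}$. *)

theory Defs
  imports Complex_Main "HOL-Library.FuncSet"
begin

(* Agents are 0..<n, items are 0..<m (item h is e_{h+1}).
   w a = weight of agent a; v a e = cost of item e for agent a. *)

definition cost :: "(nat \<Rightarrow> nat \<Rightarrow> real) \<Rightarrow> nat \<Rightarrow> nat set \<Rightarrow> real" where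
  "cost v a S = (\<Sum>e\<in>S. v a e)"

(* allocations: ordered partitions of the items into one bundle per agent,
   represented as maps item \<mapsto> agent *)
definition allocations :: "nat \<Rightarrow> nat \<Rightarrow> (nat \<Rightarrow> nat) set" where
  "allocations n m = PiE {0..<m} (\<lambda>_. {0..<n})"

definition bundle_of :: "(nat \<Rightarrow> nat) \<Rightarrow> nat \<Rightarrow> nat \<Rightarrow> nat set" where
  "bundle_of f m b = {e\<in>{0..<m}. f e = b}"

definition WMMS :: "nat \<Rightarrow> nat \<Rightarrow> (nat \<Rightarrow> real) \<Rightarrow> (nat \<Rightarrow> nat \<Rightarrow> real) \<Rightarrow> nat \<Rightarrow> real" where
  "WMMS n m w v a = w a * Min ((\<lambda>f. Max ((\<lambda>b. cost v a (bundle_of f m b) / w b) ` {0..<n})) ` allocations n m)"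

definition wmax :: "nat \<Rightarrow> (nat \<Rightarrow> real) \<Rightarrow> real" where
  "wmax n w = Max (w ` {0..<n})"

definition canonical :: "nat \<Rightarrow> nat \<Rightarrow> (nat \<Rightarrow> real) \<Rightarrow> (nat \<Rightarrow> nat \<Rightarrow> real) \<Rightarrow> bool" where
  "canonical n m w v \<longleftrightarrow>
     0 < n \<and> (\<forall>a<n. 0 < w a) \<and> (\<forall>a<n. \<forall>e<m. 0 \<le> v a e) \<and>
     (\<Sum>a<n. w a) = 1 \<and>
     (\<forall>a<n. \<exists>p::nat. w a = wmax n w / 2 ^ p) \<and>
     (\<forall>a<n. cost v a {0..<m} = 1) \<and>
     (\<forall>a<n. \<forall>e<m. v a e = 0 \<or> (\<exists>p::nat. v a e = wmax n w / 2 ^ p)) \<and>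
     (\<forall>a<n. \<forall>e e'. e \<le> e' \<and> e' < m \<longrightarrow> v a e' \<le> v a e) \<and>
     (\<forall>a<n. WMMS n m w v a = w a)"

(* Algorithm 1.  A (partial) run is given by c :: nat => nat, where c h is the
   agent that receives item h.  The bundle of agent a before step h: *)
definition bundle_before :: "(nat \<Rightarrow> nat) \<Rightarrow> nat \<Rightarrow> nat \<Rightarrow> nat set" where
  "bundle_before c a h = {h'. h' < h \<and> c h' = a}"

definition present :: "nat \<Rightarrow> (nat \<Rightarrow> real) \<Rightarrow> (nat \<Rightarrow> nat \<Rightarrow> real) \<Rightarrow> (nat \<Rightarrow> nat) \<Rightarrow> nat \<Rightarrow> nat \<Rightarrow> bool" where
  "present n w v c h a \<longleftrightarrow> a < n \<and>
     \<not> (\<exists>h'<h. c h' = a \<and> cost v a (bundle_before c a (Suc h')) \<ge> 3 * w a)"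

definition Nset :: "nat \<Rightarrow> (nat \<Rightarrow> real) \<Rightarrow> (nat \<Rightarrow> nat \<Rightarrow> real) \<Rightarrow> (nat \<Rightarrow> nat) \<Rightarrow> nat \<Rightarrow> nat set" where
  "Nset n w v c h = {a. present n w v c h a \<and> v a h \<le> w a}"

definition legal_choice :: "nat \<Rightarrow> (nat \<Rightarrow> real) \<Rightarrow> (nat \<Rightarrow> nat \<Rightarrow> real) \<Rightarrow> (nat \<Rightarrow> nat) \<Rightarrow> nat \<Rightarrow> nat \<Rightarrow> bool" where
  "legal_choice n w v c h a \<longleftrightarrow>
     a \<in> Nset n w v c h \<and>
     (\<forall>b\<in>Nset n w v c h. v a h \<le> v b h) \<and>
     (\<forall>b\<in>Nset n w v c h. v b h = v a h \<longrightarrow> w a \<le> w b)"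

definition valid_run :: "nat \<Rightarrow> (nat \<Rightarrow> real) \<Rightarrow> (nat \<Rightarrow> nat \<Rightarrow> real) \<Rightarrow> (nat \<Rightarrow> nat) \<Rightarrow> nat \<Rightarrow> bool" where
  "valid_run n w v c k \<longleftrightarrow> (\<forall>h<k. legal_choice n w v c h (c h))"

end

theory Submission
  imports Defs
begin


lemma pow_gap:
  fixes W1 x y :: real
  assumes W: "0 < W1" and x: "x = W1 / 2^p" and y: "y = W1 / 2^q" and lt: "y < x"
  shows "2 * y \<le> x"
proof -
  have "(2::real)^p < 2^q"
  proof (rule ccontr)
    assume "\<not> (2::real)^p < 2^q"
    hence "(2::real)^q \<le> 2^p" by simp
    hence "W1 / 2^p \<le> W1 / 2^q" using W by (intro divide_left_mono) auto
    thus False using lt x y by simp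
  qed
  hence "p < q" by (metis power_strict_increasing_iff one_less_numeral_iff semiring_norm(76))
  hence "(2::real)^(Suc p) \<le> 2^q" by (intro power_increasing) auto
  hence "W1 / 2^q \<le> W1 / 2^(Suc p)" using W by (intro divide_left_mono) auto
  moreover have "W1 / 2^(Suc p) = x / 2" using x by simp
  ultimately show ?thesis using y by linarith
qed

lemma pow_mult:
  fixes W1 x y :: real
  assumes W: "0 < W1" and x: "x = W1 / 2^p" and y: "y = W1 / 2^q" and le: "x \<le> y"
  shows "y = real (2^(p-q)) * x"
proof -
  have "(2::real)^q \<le> 2^p"
  proof (rule ccontr)
    assume "\<not> (2::real)^q \<le> 2^p"
    hence "(2::real)^p < 2^q" by simp
    hence "W1 / 2^q < W1 / 2^p" using W by (intro divide_strict_left_mono) auto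
    thus False using le x y by simp
  qed
  hence "q \<le> p" by (metis power_le_imp_le_exp one_less_numeral_iff semiring_norm(76))
  hence e: "(2::real)^p = 2^(p-q) * 2^q" by (simp add: power_add[symmetric])
  have "real (2^(p-q)) * x = 2^(p-q) * (W1 / (2^(p-q) * 2^q))" using x e by simp
  also have "\<dots> = W1 / 2^q" by (simp add: field_simps)
  finally show ?thesis using y by simp
qed



definition Wt :: "nat \<Rightarrow> (nat \<Rightarrow> real) \<Rightarrow> real \<Rightarrow> real" where
  "Wt n w \<rho> = (\<Sum>b<n. if \<rho> \<le> w b then w b else 0)"

locale canon =
  fixes n m :: nat and w :: "nat \<Rightarrow> real" and v :: "nat \<Rightarrow> nat \<Rightarrow> real"
  assumes can: "canonical n m w v"
begin

abbreviation "W1 \<equiv> wmax n w"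

lemma n_pos: "0 < n" using can unfolding canonical_def by auto
lemma w_pos: "a < n \<Longrightarrow> 0 < w a" using can unfolding canonical_def by auto
lemma v_nonneg: "a < n \<Longrightarrow> e < m \<Longrightarrow> 0 \<le> v a e" using can unfolding canonical_def by auto
lemma w_sum: "(\<Sum>a<n. w a) = 1" using can unfolding canonical_def by auto
lemma w_form: "a < n \<Longrightarrow> \<exists>p::nat. w a = W1 / 2^p" using can unfolding canonical_def by auto
lemma cost_one: "a < n \<Longrightarrow> cost v a {0..<m} = 1" using can unfolding canonical_def by auto
lemma v_form: "a < n \<Longrightarrow> e < m \<Longrightarrow> v a e = 0 \<or> (\<exists>p::nat. v a e = W1 / 2^p)"
  using can unfolding canonical_def by auto
lemma sorted: "a < n \<Longrightarrow> e \<le> e' \<Longrightarrow> e' < m \<Longrightarrow> v a e' \<le> v a e"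
  using can unfolding canonical_def by auto
lemma wmms: "a < n \<Longrightarrow> WMMS n m w v a = w a" using can unfolding canonical_def by auto

lemma W1_pos: "0 < W1"
proof -
  have "w 0 \<le> W1" unfolding wmax_def using n_pos by (intro Max_ge) auto
  thus ?thesis using w_pos[OF n_pos] by linarith
qed

lemma w_gap: "a < n \<Longrightarrow> b < n \<Longrightarrow> w a < w b \<Longrightarrow> 2 * w a \<le> w b"
  using w_form[of a] w_form[of b] pow_gap[OF W1_pos] by metis

lemma w_lt_v_gap: "a < n \<Longrightarrow> b < n \<Longrightarrow> e < m \<Longrightarrow> w a < v b e \<Longrightarrow> 2 * w a \<le> v b e"
proof -
  assume a: "a < n" "b < n" "e < m" "w a < v b e"
  hence "v b e \<noteq> 0" using w_pos[of a] by auto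
  then obtain q where q: "v b e = W1 / 2^q" using v_form[of b e] a by auto
  obtain p where p: "w a = W1 / 2^p" using w_form[of a] a by auto
  show ?thesis using pow_gap[OF W1_pos q p] a by simp
qed

lemma v_lt_v_gap: "a < n \<Longrightarrow> b < n \<Longrightarrow> e < m \<Longrightarrow> e' < m \<Longrightarrow> v a e < v b e' \<Longrightarrow> 2 * v a e \<le> v b e'"
proof -
  assume a: "a < n" "b < n" "e < m" "e' < m" "v a e < v b e'"
  show ?thesis
  proof (cases "v a e = 0")
    case True thus ?thesis using a by simp
  next
    case False
    then obtain p where p: "v a e = W1 / 2^p" using v_form[of a e] a by auto
    hence "v b e' \<noteq> 0" using a W1_pos by (metis divide_pos_pos less_asym zero_less_numeral zero_less_power)
    then obtain q where q: "v b e' = W1 / 2^q" using v_form[of b e'] a by auto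
    show ?thesis using pow_gap[OF W1_pos q p] a by simp
  qed
qed

lemma v_le_w_gap: "a < n \<Longrightarrow> b < n \<Longrightarrow> e < m \<Longrightarrow> v b e \<le> w a \<or> 2 * w a \<le> v b e"
  using w_lt_v_gap by force

end


context canon begin

lemma partition_exists:
  assumes a: "a < n"
  shows "\<exists>f\<in>allocations n m. \<forall>b<n. cost v a (bundle_of f m b) \<le> w b"
proof -
  let ?X = "(\<lambda>f. Max ((\<lambda>b. cost v a (bundle_of f m b) / w b) ` {0..<n})) ` allocations n m"
  have fin: "finite (allocations n m)" unfolding allocations_def by (intro finite_PiE) auto
  have ne: "allocations n m \<noteq> {}" unfolding allocations_def using n_pos by (auto simp: PiE_eq_empty_iff)
  have "w a * Min ?X = w a" using wmms[OF a] unfolding WMMS_def by simp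
  hence M: "Min ?X = 1" using w_pos[OF a] by simp
  have "Min ?X \<in> ?X" using fin ne by (intro Min_in) auto
  then obtain f where f: "f \<in> allocations n m"
    and fm: "Max ((\<lambda>b. cost v a (bundle_of f m b) / w b) ` {0..<n}) = 1" using M by auto
  have "\<forall>b<n. cost v a (bundle_of f m b) \<le> w b"
  proof (intro allI impI)
    fix b assume b: "b < n"
    have "cost v a (bundle_of f m b) / w b \<le> Max ((\<lambda>b. cost v a (bundle_of f m b) / w b) ` {0..<n})"
      using b by (intro Max_ge) auto
    hence "cost v a (bundle_of f m b) / w b \<le> 1" using fm by simp
    thus "cost v a (bundle_of f m b) \<le> w b" using w_pos[OF b] by (simp add: divide_le_eq)
  qed
  thus ?thesis using f by blast
qed

lemma capacity:
  assumes a: "a < n" and rho: "0 < \<rho>" and S: "S \<subseteq> {0..<m}" and ge: "\<forall>e\<in>S. \<rho> \<le> v a e"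
  shows "(\<Sum>e\<in>S. v a e) \<le> Wt n w \<rho>"
proof -
  obtain f where f: "f \<in> allocations n m" and fb: "\<forall>b<n. cost v a (bundle_of f m b) \<le> w b"
    using partition_exists[OF a] by blast
  have fS: "finite S" using S finite_subset by blast
  have fr: "\<forall>e\<in>S. f e < n" using f S unfolding allocations_def by (auto simp: PiE_iff)
  have "(\<Sum>e\<in>S. v a e) = (\<Sum>b\<in>{..<n}. \<Sum>e\<in>{x\<in>S. f x = b}. v a e)"
    using fS fr by (intro sum.group[symmetric]) auto
  also have "\<dots> \<le> (\<Sum>b<n. if \<rho> \<le> w b then w b else 0)"
  proof (intro sum_mono)
    fix b assume b: "b \<in> {..<n}"
    show "(\<Sum>e\<in>{x\<in>S. f x = b}. v a e) \<le> (if \<rho> \<le> w b then w b else 0)"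
    proof (cases "{x\<in>S. f x = b} = {}")
      case True
      hence "(\<Sum>e\<in>{x\<in>S. f x = b}. v a e) = 0" by (simp only: sum.empty)
      thus ?thesis using w_pos[of b] b by simp
    next
      case False
      then obtain e where e: "e \<in> S" "f e = b" by auto
      have sub: "{x\<in>S. f x = b} \<subseteq> bundle_of f m b" using S unfolding bundle_of_def by auto
      have "(\<Sum>e\<in>{x\<in>S. f x = b}. v a e) \<le> (\<Sum>e\<in>bundle_of f m b. v a e)"
        using sub a by (intro sum_mono2) (auto simp: bundle_of_def intro: v_nonneg)
      also have "\<dots> \<le> w b" using fb b unfolding cost_def by auto
      finally have le: "(\<Sum>e\<in>{x\<in>S. f x = b}. v a e) \<le> w b" .
      have nn: "\<forall>x\<in>S. 0 \<le> v a x" using S a v_nonneg by auto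
      have "v a e \<le> (\<Sum>e\<in>{x\<in>S. f x = b}. v a e)"
        using e fS nn by (intro member_le_sum) auto
      hence "\<rho> \<le> w b" using ge e le by fastforce
      thus ?thesis using le by simp
    qed
  qed
  finally show ?thesis unfolding Wt_def .
qed

end


context canon begin

lemma present_mono: "present n w v c i a \<Longrightarrow> j \<le> i \<Longrightarrow> present n w v c j a"
  unfolding present_def by auto

lemma legal_facts:
  assumes "legal_choice n w v c i (c i)"
  shows "c i < n" "present n w v c i (c i)" "v (c i) i \<le> w (c i)"
  using assms unfolding legal_choice_def Nset_def present_def by auto

lemma valid_run_mono: "valid_run n w v c s \<Longrightarrow> s' \<le> s \<Longrightarrow> valid_run n w v c s'"
  unfolding valid_run_def by auto

lemma item_le:
  assumes L: "legal_choice n w v c i (c i)" and i: "i < m" and p: "p < n"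
    and pp: "present n w v c i p" and le: "w (c i) \<le> w p"
  shows "v (c i) i \<le> v p i"
proof (cases "v p i \<le> w p")
  case True
  hence "p \<in> Nset n w v c i" using pp unfolding Nset_def by auto
  thus ?thesis using L unfolding legal_choice_def by auto
next
  case False
  thus ?thesis using legal_facts(3)[OF L] le by linarith
qed

lemma item_heavy_small:
  assumes L: "legal_choice n w v c i (c i)" and i: "i < m" and p: "p < n"
    and pp: "present n w v c i p" and lt: "w p < w (c i)" and sm: "v (c i) i \<le> w p"
  shows "2 * v (c i) i \<le> v p i"
proof (cases "v p i \<le> w p")
  case True
  hence pN: "p \<in> Nset n w v c i" using pp unfolding Nset_def by auto
  hence ge: "v (c i) i \<le> v p i" using L unfolding legal_choice_def by auto
  have ne: "v p i \<noteq> v (c i) i"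
  proof
    assume "v p i = v (c i) i"
    hence "w (c i) \<le> w p" using L pN unfolding legal_choice_def by auto
    thus False using lt by simp
  qed
  hence "v (c i) i < v p i" using ge by simp
  thus ?thesis using v_lt_v_gap[OF legal_facts(1)[OF L] p i i] by simp
next
  case False
  hence "2 * w p \<le> v p i" using w_lt_v_gap[OF p p i] by simp
  thus ?thesis using sm by linarith
qed

lemma bundle_nonneg: "b < n \<Longrightarrow> s \<le> m \<Longrightarrow> i \<in> bundle_before c b s \<Longrightarrow> 0 \<le> v b i"
  unfolding bundle_before_def by (auto intro: v_nonneg)

lemma removed_cost:
  assumes b: "b < n" and s: "s \<le> m" and np: "\<not> present n w v c s b"
  shows "3 * w b \<le> cost v b (bundle_before c b s)"
proof -
  obtain h' where h': "h' < s" "c h' = b" "3 * w b \<le> cost v b (bundle_before c b (Suc h'))"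
    using np b unfolding present_def by auto
  have sub: "bundle_before c b (Suc h') \<subseteq> bundle_before c b s"
    using h' unfolding bundle_before_def by auto
  have "cost v b (bundle_before c b (Suc h')) \<le> cost v b (bundle_before c b s)"
    unfolding cost_def using sub b s
    by (intro sum_mono2) (auto simp: bundle_before_def intro: v_nonneg)
  thus ?thesis using h' by linarith
qed

lemma regroup:
  assumes vr: "valid_run n w v c s"
  shows "(\<Sum>i<s. if Q (c i) then v (c i) i else 0)
       = (\<Sum>b<n. if Q b then cost v b (bundle_before c b s) else 0)"
proof -
  have cn: "\<forall>i<s. c i < n" using vr legal_facts(1) unfolding valid_run_def by blast
  have "(\<Sum>i<s. if Q (c i) then v (c i) i else 0)
      = (\<Sum>b\<in>{..<n}. \<Sum>i\<in>{x\<in>{..<s}. c x = b}. if Q (c i) then v (c i) i else 0)"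
    using cn by (intro sum.group[symmetric]) auto
  also have "\<dots> = (\<Sum>b<n. if Q b then cost v b (bundle_before c b s) else 0)"
  proof (intro sum.cong refl)
    fix b assume "b \<in> {..<n}"
    have eq: "{x\<in>{..<s}. c x = b} = bundle_before c b s" unfolding bundle_before_def by auto
    have "(\<Sum>i\<in>{x\<in>{..<s}. c x = b}. if Q (c i) then v (c i) i else 0)
        = (\<Sum>i\<in>{x\<in>{..<s}. c x = b}. if Q b then v b i else 0)" by (intro sum.cong) auto
    also have "\<dots> = (if Q b then cost v b (bundle_before c b s) else 0)"
      unfolding cost_def eq by simp
    finally show "(\<Sum>i\<in>{x\<in>{..<s}. c x = b}. if Q (c i) then v (c i) i else 0)
        = (if Q b then cost v b (bundle_before c b s) else 0)" .
  qed
  finally show ?thesis .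
qed

end


context canon begin

lemma Wt_heavier:
  assumes p: "p < n"
  shows "Wt n w (2 * w p) = (\<Sum>b<n. if w p < w b then w b else 0)"
  unfolding Wt_def
proof (intro sum.cong refl)
  fix b assume b: "b \<in> {..<n}"
  have "(2 * w p \<le> w b) = (w p < w b)"
    using w_gap[OF p, of b] b w_pos[OF p] by auto
  thus "(if 2 * w p \<le> w b then w b else 0) = (if w p < w b then w b else 0)" by simp
qed

lemma heavy_receipts:
  assumes vr: "valid_run n w v c s" and sm: "s \<le> m" and p: "p < n"
    and hv: "\<forall>b<n. w p < w b \<longrightarrow> \<not> present n w v c s b"
  shows "3 * (\<Sum>b<n. if w p < w b then w b else 0) \<le> (\<Sum>i<s. if w p < w (c i) then v (c i) i else 0)"
proof -
  have "3 * (\<Sum>b<n. if w p < w b then w b else 0) = (\<Sum>b<n. if w p < w b then 3 * w b else 0)"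
    by (subst sum_distrib_left) (auto intro!: sum.cong)
  also have "\<dots> \<le> (\<Sum>b<n. if w p < w b then cost v b (bundle_before c b s) else 0)"
    using removed_cost[OF _ sm] hv by (intro sum_mono) auto
  also have "\<dots> = (\<Sum>i<s. if w p < w (c i) then v (c i) i else 0)"
    using regroup[OF vr, of "\<lambda>b. w p < w b"] by simp
  finally show ?thesis .
qed

lemma CL:
  assumes vr: "valid_run n w v c s" and sm: "s \<le> m" and p: "p < n"
    and pp: "\<forall>i<s. present n w v c i p"
    and hv: "\<forall>b<n. w p < w b \<longrightarrow> \<not> present n w v c s b"
    and big: "(\<Sum>i<s. if 2 * w p \<le> v (c i) i then v (c i) i else 0) \<le> Wt n w (2 * w p)"
  shows "(\<Sum>i<s. v (c i) i) \<le> (\<Sum>i<s. v p i)"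
proof -
  define X where "X = (\<Sum>b<n. if w p < w b then w b else 0)"
  have X0: "0 \<le> X" unfolding X_def using w_pos by (intro sum_nonneg) (auto intro: less_imp_le)
  have L: "\<And>i. i < s \<Longrightarrow> legal_choice n w v c i (c i)" using vr unfolding valid_run_def by auto
  have cn: "\<And>i. i < s \<Longrightarrow> c i < n" using L legal_facts(1) by blast
  have im: "\<And>i. i < s \<Longrightarrow> i < m" using sm by simp
  have heavy: "3 * X \<le> (\<Sum>i<s. if w p < w (c i) then v (c i) i else 0)"
    using heavy_receipts[OF vr sm p hv] unfolding X_def .
  have bp: "(\<Sum>i<s. if w p < w (c i) \<and> w p < v (c i) i then v (c i) i else 0) \<le> X"
  proof -
    have "(\<Sum>i<s. if w p < w (c i) \<and> w p < v (c i) i then v (c i) i else 0)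
        \<le> (\<Sum>i<s. if 2 * w p \<le> v (c i) i then v (c i) i else 0)"
    proof (intro sum_mono)
      fix i assume i: "i \<in> {..<s}"
      hence i': "i < s" by simp
      have nn: "0 \<le> v (c i) i" using v_nonneg[OF cn[OF i'] im[OF i']] .
      show "(if w p < w (c i) \<and> w p < v (c i) i then v (c i) i else 0)
          \<le> (if 2 * w p \<le> v (c i) i then v (c i) i else 0)"
        using w_lt_v_gap[OF p cn[OF i'] im[OF i']] nn by auto
    qed
    also have "\<dots> \<le> X" using big Wt_heavier[OF p] unfolding X_def by simp
    finally show ?thesis .
  qed
  have pw: "\<And>i. i < s \<Longrightarrow> (if w p < w (c i) then v (c i) i else 0)
            - 2 * (if w p < w (c i) \<and> w p < v (c i) i then v (c i) i else 0) \<le> v p i - v (c i) i"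
  proof -
    fix i assume i: "i < s"
    have pr: "present n w v c i p" using pp i by simp
    show "(if w p < w (c i) then v (c i) i else 0)
            - 2 * (if w p < w (c i) \<and> w p < v (c i) i then v (c i) i else 0) \<le> v p i - v (c i) i"
    proof (cases "w p < w (c i)")
      case False
      hence "v (c i) i \<le> v p i" using item_le[OF L[OF i] im[OF i] p pr] by simp
      thus ?thesis using False by simp
    next
      case True
      show ?thesis
      proof (cases "w p < v (c i) i")
        case True2: True
        have "0 \<le> v p i" using v_nonneg[OF p im[OF i]] .
        thus ?thesis using True True2 by simp
      next
        case False2: False
        hence "2 * v (c i) i \<le> v p i"
          using item_heavy_small[OF L[OF i] im[OF i] p pr True] by simp
        thus ?thesis using True False2 by simp
      qed
    qed
  qed
  have "(\<Sum>i<s. if w p < w (c i) then v (c i) i else 0)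
        - 2 * (\<Sum>i<s. if w p < w (c i) \<and> w p < v (c i) i then v (c i) i else 0)
      = (\<Sum>i<s. (if w p < w (c i) then v (c i) i else 0)
            - 2 * (if w p < w (c i) \<and> w p < v (c i) i then v (c i) i else 0))"
    by (simp add: sum_subtractf sum_distrib_left)
  also have "\<dots> \<le> (\<Sum>i<s. v p i - v (c i) i)" using pw by (intro sum_mono) auto
  also have "\<dots> = (\<Sum>i<s. v p i) - (\<Sum>i<s. v (c i) i)" by (simp add: sum_subtractf)
  finally show ?thesis using heavy bp X0 by linarith
qed

end


context canon begin

lemma Wt_nonneg: "0 \<le> Wt n w \<rho>"
  unfolding Wt_def using w_pos by (intro sum_nonneg) (auto intro: less_imp_le)

lemma heaviest_exists:
  assumes "b0 < n" "present n w v c j b0"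
  obtains p where "p < n" "present n w v c j p" "\<And>b. b < n \<Longrightarrow> present n w v c j b \<Longrightarrow> w b \<le> w p"
proof -
  let ?P = "{b. b < n \<and> present n w v c j b}"
  have fin: "finite ?P" by simp
  have ne: "?P \<noteq> {}" using assms by auto
  have "Max (w ` ?P) \<in> w ` ?P" using fin ne by (intro Max_in) auto
  then obtain p where p: "p \<in> ?P" "w p = Max (w ` ?P)" by auto
  have "\<And>b. b < n \<Longrightarrow> present n w v c j b \<Longrightarrow> w b \<le> w p"
    using p(2) fin by (metis (mono_tags, lifting) Max_ge finite_imageI image_eqI mem_Collect_eq)
  thus ?thesis using that p by auto
qed

lemma VL:
  "valid_run n w v c s \<Longrightarrow> s \<le> m \<Longrightarrow> 0 < \<rho> \<Longrightarrow>
   (\<Sum>i<s. if \<rho> \<le> v (c i) i then v (c i) i else 0) \<le> Wt n w \<rho>"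
proof (induction s arbitrary: \<rho> rule: less_induct)
  case (less s)
  note vr = less.prems(1) and sm = less.prems(2) and rho = less.prems(3)
  have L: "\<And>i. i < s \<Longrightarrow> legal_choice n w v c i (c i)" using vr unfolding valid_run_def by auto
  have cn: "\<And>i. i < s \<Longrightarrow> c i < n" using L legal_facts(1) by blast
  have rnn: "\<And>i. i < s \<Longrightarrow> 0 \<le> v (c i) i" using cn sm v_nonneg by simp
  let ?A = "{i. i < s \<and> \<rho> \<le> v (c i) i}"
  show ?case
  proof (cases "?A = {}")
    case True
    hence "(\<Sum>i<s. if \<rho> \<le> v (c i) i then v (c i) i else 0) = 0" by (intro sum.neutral) auto
    thus ?thesis using Wt_nonneg by simp
  next
    case False
    have finA: "finite ?A" by simp
    define j where "j = Max ?A"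
    have jA: "j \<in> ?A" unfolding j_def using finA False by (rule Max_in)
    have jmax: "\<And>i. i \<in> ?A \<Longrightarrow> i \<le> j" unfolding j_def using finA by simp
    have js: "j < s" and rj: "\<rho> \<le> v (c j) j" using jA by auto
    have jm: "j < m" using js sm by simp
    have "(\<Sum>i<s. if \<rho> \<le> v (c i) i then v (c i) i else 0)
        = (\<Sum>i<Suc j. if \<rho> \<le> v (c i) i then v (c i) i else 0)"
    proof (rule sum.mono_neutral_right)
      show "finite {..<s}" by simp
      show "{..<Suc j} \<subseteq> {..<s}" using js by auto
      show "\<forall>i\<in>{..<s} - {..<Suc j}. (if \<rho> \<le> v (c i) i then v (c i) i else 0) = 0"
      proof
        fix i assume i: "i \<in> {..<s} - {..<Suc j}"
        hence "i \<notin> ?A" using jmax by force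
        thus "(if \<rho> \<le> v (c i) i then v (c i) i else 0) = 0" using i by auto
      qed
    qed
    also have "\<dots> \<le> (\<Sum>i<Suc j. v (c i) i)"
      using rnn js by (intro sum_mono) auto
    finally have s1: "(\<Sum>i<s. if \<rho> \<le> v (c i) i then v (c i) i else 0) \<le> (\<Sum>i<Suc j. v (c i) i)" .
    have cjp: "present n w v c j (c j)" using legal_facts(2)[OF L[OF js]] .
    obtain p where p: "p < n" "present n w v c j p"
      and pmax: "\<And>b. b < n \<Longrightarrow> present n w v c j b \<Longrightarrow> w b \<le> w p"
      using heaviest_exists[OF cn[OF js] cjp] by blast
    have vrj: "valid_run n w v c (Suc j)" using valid_run_mono[OF vr] js by simp
    have pp: "\<forall>i<Suc j. present n w v c i p" using present_mono[OF p(2)] by simp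
    have hv: "\<forall>b<n. w p < w b \<longrightarrow> \<not> present n w v c (Suc j) b"
      using pmax present_mono by (meson le_SucI linorder_not_le order_refl)
    have wcj: "w (c j) \<le> w p" using pmax[OF cn[OF js] cjp] .
    have wp0: "0 < w p" using w_pos[OF p(1)] .
    have big: "(\<Sum>i<Suc j. if 2 * w p \<le> v (c i) i then v (c i) i else 0) \<le> Wt n w (2 * w p)"
    proof -
      have "v (c j) j \<le> w (c j)" using legal_facts(3)[OF L[OF js]] .
      hence lastz: "\<not> 2 * w p \<le> v (c j) j" using wcj wp0 by linarith
      have "(\<Sum>i<Suc j. if 2 * w p \<le> v (c i) i then v (c i) i else 0)
          = (\<Sum>i<j. if 2 * w p \<le> v (c i) i then v (c i) i else 0)" using lastz by simp
      also have "\<dots> \<le> Wt n w (2 * w p)"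
        using less.IH[OF js valid_run_mono[OF vr] _ ] js sm wp0 by simp
      finally show ?thesis .
    qed
    have s2: "(\<Sum>i<Suc j. v (c i) i) \<le> (\<Sum>i<Suc j. v p i)"
      using CL[OF vrj _ p(1) pp hv big] js sm by simp
    have s3: "(\<Sum>i<Suc j. v p i) \<le> Wt n w \<rho>"
    proof -
      have vpj: "v (c j) j \<le> v p j" using item_le[OF L[OF js] jm p(1) p(2) wcj] .
      have "\<forall>i\<in>{..<Suc j}. \<rho> \<le> v p i"
      proof
        fix i assume "i \<in> {..<Suc j}"
        hence "i \<le> j" by simp
        hence "v p j \<le> v p i" using sorted[OF p(1) _ jm] by simp
        thus "\<rho> \<le> v p i" using rj vpj by linarith
      qed
      moreover have "{..<Suc j} \<subseteq> {0..<m}" using jm by auto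
      ultimately show ?thesis using capacity[OF p(1) rho] by blast
    qed
    show ?thesis using s1 s2 s3 by linarith
  qed
qed

end


lemma sum_nat_multiple:
  fixes f :: "nat \<Rightarrow> real"
  assumes "finite B" "\<forall>i\<in>B. \<exists>N::nat. f i = real N * x"
  shows "\<exists>N::nat. sum f B = real N * x"
  using assms
proof (induction B rule: finite_induct)
  case empty thus ?case by (intro exI[of _ 0]) simp
next
  case (insert i B)
  then obtain N where N: "sum f B = real N * x" by auto
  obtain K where K: "f i = real K * x" using insert.prems by auto
  have "sum f (insert i B) = real (K + N) * x" using insert.hyps N K by (simp add: algebra_simps)
  thus ?case by blast
qed

context canon begin

lemma nonempty:
  assumes hm: "h < m" and vr: "valid_run n w v c h"
  shows "Nset n w v c h \<noteq> {}"
proof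
  assume E: "Nset n w v c h = {}"
  have hm': "h \<le> m" using hm by simp
  have L: "\<And>i. i < h \<Longrightarrow> legal_choice n w v c i (c i)" using vr unfolding valid_run_def by auto
  have cn: "\<And>i. i < h \<Longrightarrow> c i < n" using L legal_facts(1) by blast
  have rnn: "\<And>i. i < h \<Longrightarrow> 0 \<le> v (c i) i" using cn hm v_nonneg by simp
  show False
  proof (cases "\<exists>b<n. present n w v c h b")
    case True
    then obtain b0 where b0: "b0 < n" "present n w v c h b0" by auto
    obtain p where p: "p < n" "present n w v c h p"
      and pmax: "\<And>b. b < n \<Longrightarrow> present n w v c h b \<Longrightarrow> w b \<le> w p"
      using heaviest_exists[OF b0] by blast
    have "p \<notin> Nset n w v c h" using E by simp
    hence gt: "w p < v p h" using p(2) unfolding Nset_def by auto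
    have g2: "2 * w p \<le> v p h" using w_lt_v_gap[OF p(1) p(1) hm gt] .
    have wp0: "0 < w p" using w_pos[OF p(1)] .
    have pp: "\<forall>i<h. present n w v c i p" using present_mono[OF p(2)] by simp
    have hv: "\<forall>b<n. w p < w b \<longrightarrow> \<not> present n w v c h b" using pmax by force
    have big: "(\<Sum>i<h. if 2 * w p \<le> v (c i) i then v (c i) i else 0) \<le> Wt n w (2 * w p)"
      using VL[OF vr hm'] wp0 by simp
    have s1: "(\<Sum>i<h. v (c i) i) \<le> (\<Sum>i<h. v p i)" using CL[OF vr hm' p(1) pp hv big] .
    define X where "X = (\<Sum>b<n. if w p < w b then w b else 0)"
    have X0: "0 \<le> X" unfolding X_def using w_pos by (intro sum_nonneg) (auto intro: less_imp_le)
    have "3 * X \<le> (\<Sum>i<h. if w p < w (c i) then v (c i) i else 0)"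
      using heavy_receipts[OF vr hm' p(1) hv] unfolding X_def .
    also have "\<dots> \<le> (\<Sum>i<h. v (c i) i)" using rnn by (intro sum_mono) auto
    finally have s2: "3 * X \<le> (\<Sum>i<h. v (c i) i)" .
    have s3: "(\<Sum>i<Suc h. v p i) \<le> X"
    proof -
      have "\<forall>i\<in>{..<Suc h}. 2 * w p \<le> v p i"
      proof
        fix i assume "i \<in> {..<Suc h}"
        hence "i \<le> h" by simp
        hence "v p h \<le> v p i" using sorted[OF p(1) _ hm] by simp
        thus "2 * w p \<le> v p i" using g2 by linarith
      qed
      moreover have "{..<Suc h} \<subseteq> {0..<m}" using hm by auto
      moreover have "0 < 2 * w p" using wp0 by simp
      ultimately have "(\<Sum>i<Suc h. v p i) \<le> Wt n w (2 * w p)" using capacity[OF p(1)] by blast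
      thus ?thesis using Wt_heavier[OF p(1)] unfolding X_def by simp
    qed
    have "(\<Sum>i<Suc h. v p i) = (\<Sum>i<h. v p i) + v p h" by simp
    thus False using s1 s2 s3 X0 g2 wp0 by linarith
  next
    case False
    have h0: "h \<noteq> 0"
    proof
      assume "h = 0"
      hence "present n w v c h 0" using n_pos unfolding present_def by simp
      thus False using False n_pos by blast
    qed
    then obtain j where hj: "h = Suc j" by (cases h) auto
    have js: "j < h" using hj by simp
    have cjp: "present n w v c j (c j)" using legal_facts(2)[OF L[OF js]] .
    obtain p where p: "p < n" "present n w v c j p"
      and pmax: "\<And>b. b < n \<Longrightarrow> present n w v c j b \<Longrightarrow> w b \<le> w p"
      using heaviest_exists[OF cn[OF js] cjp] by blast
    have wp0: "0 < w p" using w_pos[OF p(1)] .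
    have pp: "\<forall>i<h. present n w v c i p" using present_mono[OF p(2)] hj by simp
    have hv: "\<forall>b<n. w p < w b \<longrightarrow> \<not> present n w v c h b" using False by blast
    have big: "(\<Sum>i<h. if 2 * w p \<le> v (c i) i then v (c i) i else 0) \<le> Wt n w (2 * w p)"
      using VL[OF vr hm'] wp0 by simp
    have s1: "(\<Sum>i<h. v (c i) i) \<le> (\<Sum>i<h. v p i)" using CL[OF vr hm' p(1) pp hv big] .
    have "(\<Sum>i<h. v p i) \<le> (\<Sum>i\<in>{0..<m}. v p i)"
      using hm p(1) by (intro sum_mono2) (auto intro: v_nonneg)
    also have "\<dots> = 1" using cost_one[OF p(1)] unfolding cost_def .
    finally have s2: "(\<Sum>i<h. v p i) \<le> 1" .
    have "(\<Sum>i<h. v (c i) i) = (\<Sum>i<h. if True then v (c i) i else 0)" by simp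
    also have "\<dots> = (\<Sum>b<n. if True then cost v b (bundle_before c b h) else 0)"
      by (rule regroup[OF vr])
    also have "\<dots> \<ge> (\<Sum>b<n. 3 * w b)"
      using removed_cost[OF _ hm'] False by (intro sum_mono) auto
    finally have "(\<Sum>b<n. 3 * w b) \<le> (\<Sum>i<h. v (c i) i)" .
    moreover have "(\<Sum>b<n. 3 * w b) = 3" using w_sum by (simp add: sum_distrib_left[symmetric])
    ultimately show False using s1 s2 by linarith
  qed
qed

lemma cost_bound:
  "valid_run n w v c s \<Longrightarrow> s \<le> m \<Longrightarrow> a < n \<Longrightarrow> cost v a (bundle_before c a s) \<le> 3 * w a"
proof (induction s)
  case 0
  have "bundle_before c a 0 = {}" unfolding bundle_before_def by simp
  thus ?case using w_pos[OF 0(3)] unfolding cost_def by simp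
next
  case (Suc s)
  note a = Suc.prems(3)
  have vr: "valid_run n w v c s" using valid_run_mono[OF Suc.prems(1)] by simp
  have Ls: "legal_choice n w v c s (c s)" using Suc.prems(1) unfolding valid_run_def by simp
  have sm: "s < m" using Suc.prems(2) by simp
  have IH: "cost v a (bundle_before c a s) \<le> 3 * w a" using Suc.IH[OF vr _ a] sm by simp
  show ?case
  proof (cases "c s = a")
    case False
    have "bundle_before c a (Suc s) = bundle_before c a s"
      unfolding bundle_before_def using False less_Suc_eq by auto
    thus ?thesis using IH by simp
  next
    case True
    define B where "B = bundle_before c a s"
    have finB: "finite B" unfolding B_def bundle_before_def by simp
    have sB: "s \<notin> B" unfolding B_def bundle_before_def by simp
    have bb: "bundle_before c a (Suc s) = insert s B"
      unfolding B_def bundle_before_def using True less_Suc_eq by auto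
    have cs: "cost v a (bundle_before c a (Suc s)) = v a s + cost v a B"
      unfolding bb cost_def using finB sB by simp
    have pres: "present n w v c s a" using legal_facts(2)[OF Ls] True by simp
    have vle: "v a s \<le> w a" using legal_facts(3)[OF Ls] True by simp
    have lt: "cost v a B < 3 * w a"
    proof (cases "B = {}")
      case True thus ?thesis using w_pos[OF a] unfolding cost_def by simp
    next
      case False
      define h' where "h' = Max B"
      have h'B: "h' \<in> B" unfolding h'_def using finB False by (rule Max_in)
      have h'max: "\<And>i. i \<in> B \<Longrightarrow> i \<le> h'" unfolding h'_def using finB by simp
      have h's: "h' < s" "c h' = a" using h'B unfolding B_def bundle_before_def by auto
      have eq: "bundle_before c a (Suc h') = B"
        unfolding B_def bundle_before_def using h's h'max[unfolded B_def bundle_before_def]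
        by (auto simp: less_Suc_eq_le)
      have "\<not> 3 * w a \<le> cost v a (bundle_before c a (Suc h'))"
        using pres h's unfolding present_def by blast
      thus ?thesis using eq by simp
    qed
    show ?thesis
    proof (cases "v a s = 0")
      case True thus ?thesis using cs lt by simp
    next
      case False
      have x0: "0 < v a s" using v_nonneg[OF a sm] False by simp
      obtain q where q: "v a s = W1 / 2^q" using v_form[OF a sm] False by auto
      obtain k where k: "w a = W1 / 2^k" using w_form[OF a] by auto
      have wmul: "w a = real (2^(q-k)) * v a s" using pow_mult[OF W1_pos q k vle] .
      have "\<forall>i\<in>B. \<exists>N::nat. v a i = real N * v a s"
      proof
        fix i assume iB: "i \<in> B"
        hence is': "i < s" unfolding B_def bundle_before_def by simp
        have ge: "v a s \<le> v a i" using sorted[OF a _ sm] is' by simp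
        hence "v a i \<noteq> 0" using x0 by simp
        moreover have im: "i < m" using is' sm by simp
        ultimately obtain pi where pi: "v a i = W1 / 2^pi" using v_form[OF a im] by auto
        show "\<exists>N::nat. v a i = real N * v a s" using pow_mult[OF W1_pos q pi ge] by blast
      qed
      then obtain N where N: "cost v a B = real N * v a s"
        using sum_nat_multiple[OF finB] unfolding cost_def by blast
      define M :: nat where "M = 3 * 2^(q-k)"
      have M: "3 * w a = real M * v a s" unfolding M_def using wmul by simp
      have "real N * v a s < real M * v a s" using lt N M by simp
      hence "N < M" using x0 by (simp add: mult_less_cancel_right)
      hence "real N + 1 \<le> real M" by linarith
      hence "(real N + 1) * v a s \<le> real M * v a s" using x0 by (intro mult_right_mono) auto
      thus ?thesis using cs N M by (simp add: algebra_simps)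
    qed
  qed
qed

end

theorem theorem4p1:
  fixes n m :: nat and w :: "nat \<Rightarrow> real" and v :: "nat \<Rightarrow> nat \<Rightarrow> real"
  assumes "canonical n m w v"
  shows "(\<forall>h<m. \<forall>c. valid_run n w v c h \<longrightarrow> Nset n w v c h \<noteq> {}) \<and>
         (\<forall>c. valid_run n w v c m \<longrightarrow>
            (\<forall>a<n. cost v a (bundle_before c a m) \<le> 3 * w a \<and>
                   3 * w a = 3 * WMMS n m w v a))"
proof -
  interpret canon n m w v using assms by (rule canon.intro)
  show ?thesis using nonempty cost_bound wmms by auto
qed

end
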